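(* (i) If $a\ge0$, there is $C(a)>0$ such that for all $t\neq0$ and $\varphi\in\mathscr S^+$: $\|S_a(t)\varphi\|_{L^\infty(\mathbb R^+)}\le C(a)|t|^{-\frac{a+1}2}\|\varphi\|_{L^1_a}$. (ii) If $-1<a<0$, there is $C(a)>0$ such that for all $t\neq0$ and $\varphi\in\mathscr S^+$: $$\|S_a(t)\varphi\,k_1\|_{L^\infty(\mathbb R^+)}\le C(a)\big(|t|^{-\frac{a+1}2}+|t|^{-\frac12}\big)\|\varphi\,u_1\|_{L^1(\mathbb R^+,dx)}.$$
   Context: $\mathbb R^+=(0,\infty)$, $d\omega_a(x)=x^a\,dx$, $L^r_a=L^r(\mathbb R^+,d\omega_a)$. $\mathscr S^+$ is the set of $\varphi\in C^\infty(\mathbb R^+;\mathbb C)$ with $\sup_{x>0}|x^m(x^{-1}\partial_x)^k\varphi(x)|<\infty$ for all $m,k\in\mathbb N_0$. For $-1<a<0$: $k_1(x)=\min\{1,x^{a/2}\}$ and $u_1(x)=\max\{x^{a/2},x^a\}$. Kernel: for $x,y>0$, $S_a(x,y,t)=\frac{e^{-i(a+1)\pi/4}}{(2|t|)^{(a+1)/2}}\big(\frac{xy}{2|t|}\big)^{\frac{1-a}2}J_{\frac{a-1}2}\big(\frac{xy}{2|t|}\big)e^{i\frac{x^2+y^2}{4|t|}}$ if $t>0$, its analogue with $e^{i(a+1)\pi/4}$ and $e^{-i\frac{x^2+y^2}{4|t|}}$ if $t<0$ ($J_\nu$ Bessel function of the first kind); $S_a(t)\varphi(x)=\int_0^\infty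 S_a(x,y,t)\varphi(y)\,d\omega_a(y)$. *)

theory Defs
  imports "HOL-Analysis.Analysis"
begin

definition besselJ :: "real \<Rightarrow> real \<Rightarrow> real" where
  "besselJ \<nu> z = (\<Sum>k. (-1) ^ k * rGamma (real k + \<nu> + 1) / fact k * (z / 2) powr (2 * real k + \<nu>))"

definition vd :: "(real \<Rightarrow> complex) \<Rightarrow> real \<Rightarrow> complex" where
  "vd f = (\<lambda>x. vector_derivative f (at x))"

definition Dop :: "(real \<Rightarrow> complex) \<Rightarrow> real \<Rightarrow> complex" where
  "Dop f = (\<lambda>x. (1 / x) *\<^sub>R vector_derivative f (at x))"

definition schwartz_plus :: "(real \<Rightarrow> complex) \<Rightarrow> bool" where
  "schwartz_plus \<phi> \<longleftrightarrow>
     (\<forall>k. \<forall>x>0. ((vd ^^ k) \<phi>) differentiable (at x)) \<and>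
     (\<forall>m k. \<exists>B. \<forall>x>0. norm ((x ^ m) *\<^sub>R ((Dop ^^ k) \<phi> x)) \<le> B)"

definition S_kernel :: "real \<Rightarrow> real \<Rightarrow> real \<Rightarrow> real \<Rightarrow> complex" where
  "S_kernel a x y t =
     (if t > 0 then cis (- (a + 1) * pi / 4) else cis ((a + 1) * pi / 4)) *
     complex_of_real ((2 * \<bar>t\<bar>) powr (- (a + 1) / 2) *
        (x * y / (2 * \<bar>t\<bar>)) powr ((1 - a) / 2) * besselJ ((a - 1) / 2) (x * y / (2 * \<bar>t\<bar>))) *
     (if t > 0 then cis ((x\<^sup>2 + y\<^sup>2) / (4 * \<bar>t\<bar>)) else cis (- (x\<^sup>2 + y\<^sup>2) / (4 * \<bar>t\<bar>)))"

definition S_op :: "real \<Rightarrow> real \<Rightarrow> (real \<Rightarrow> complex) \<Rightarrow> real \<Rightarrow> complex" where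
  "S_op a t \<phi> x = (\<integral>y\<in>{0<..}. (y powr a) *\<^sub>R (S_kernel a x y t * \<phi> y) \<partial>lborel)"

definition k1 :: "real \<Rightarrow> real \<Rightarrow> real" where
  "k1 a x = min 1 (x powr (a / 2))"

definition u1 :: "real \<Rightarrow> real \<Rightarrow> real" where
  "u1 a x = max (x powr (a / 2)) (x powr a)"

end

theory Submission
  imports Defs
begin

definition gc :: "real \<Rightarrow> nat \<Rightarrow> real" where
  "gc \<nu> k = (-1) ^ k * rGamma (real k + \<nu> + 1) / fact k"

definition gser :: "real \<Rightarrow> real \<Rightarrow> real" where
  "gser \<nu> w = (\<Sum>k. gc \<nu> k * w ^ k)"

lemma poch_lower: "(x::real) > 0 \<Longrightarrow> pochhammer x k \<ge> min 1 x"
proof (induction k)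
  case 0 then show ?case by simp
next
  case (Suc k)
  show ?case
  proof (cases "k = 0")
    case True then show ?thesis by simp
  next
    case False
    then have "x + real k \<ge> 1" using Suc by auto
    moreover have "pochhammer x k \<ge> min 1 x" using Suc by auto
    moreover have "min 1 x > 0" using Suc by auto
    ultimately have "pochhammer x k * (x + real k) \<ge> min 1 x * 1"
      by (intro mult_mono) auto
    then show ?thesis by (simp add: pochhammer_Suc)
  qed
qed

lemma rGamma_bound:
  assumes "\<nu> > -1"
  shows "\<bar>rGamma (real k + \<nu> + 1)\<bar> \<le> \<bar>rGamma (\<nu> + 1)\<bar> / min 1 (\<nu> + 1)"
proof -
  have e: "rGamma (\<nu> + 1) = pochhammer (\<nu> + 1) k * rGamma (\<nu> + 1 + real k)"
    by (rule pochhammer_rGamma)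
  have p: "pochhammer (\<nu> + 1) k \<ge> min 1 (\<nu> + 1)" using assms poch_lower by auto
  have m: "min 1 (\<nu> + 1) > 0" using assms by auto
  have "\<bar>rGamma (real k + \<nu> + 1)\<bar> * min 1 (\<nu> + 1) \<le> \<bar>rGamma (real k + \<nu> + 1)\<bar> * pochhammer (\<nu> + 1) k"
    using p by (intro mult_left_mono) auto
  also have "\<dots> = \<bar>rGamma (\<nu> + 1)\<bar>" using e p m
    by (simp add: abs_mult algebra_simps)
  finally show ?thesis using m by (simp add: field_simps)
qed

lemma gc_summable:
  assumes "\<nu> > -1"
  shows "summable (\<lambda>k. gc \<nu> k * w ^ k)"
proof -
  define R where "R = \<bar>rGamma (\<nu> + 1)\<bar> / min 1 (\<nu> + 1)"
  have s: "summable (\<lambda>k. R * (inverse (fact k) * \<bar>w\<bar> ^ k))"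
    by (intro summable_mult summable_exp)
  show ?thesis
  proof (rule summable_comparison_test'[OF s])
    fix k :: nat
    have "norm (gc \<nu> k * w ^ k) = \<bar>rGamma (real k + \<nu> + 1)\<bar> * (inverse (fact k) * \<bar>w\<bar> ^ k)"
      by (simp add: gc_def abs_mult power_abs field_simps)
    also have "\<dots> \<le> R * (inverse (fact k) * \<bar>w\<bar> ^ k)"
      unfolding R_def using rGamma_bound[OF assms]
      by (intro mult_right_mono) auto
    finally show "norm (gc \<nu> k * w ^ k) \<le> R * (inverse (fact k) * \<bar>w\<bar> ^ k)" .
  qed
qed

lemma besselJ_eq:
  assumes "\<nu> > -1" "z > 0"
  shows "besselJ \<nu> z = (z / 2) powr \<nu> * gser \<nu> ((z / 2)\<^sup>2)"
proof -
  have pw: "(z / 2) powr (2 * real k + \<nu>) = (z / 2) powr \<nu> * ((z / 2)\<^sup>2) ^ k" for k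
  proof -
    have "(z / 2) powr (2 * real k + \<nu>) = (z / 2) powr (real (2 * k)) * (z / 2) powr \<nu>"
      by (simp add: powr_add)
    also have "(z / 2) powr (real (2 * k)) = (z / 2) ^ (2 * k)"
      using assms by (intro powr_realpow) auto
    finally show ?thesis by (simp add: power_mult)
  qed
  have "\<And>k. (-1) ^ k * rGamma (real k + \<nu> + 1) / fact k * (z / 2) powr (2 * real k + \<nu>)
        = (z / 2) powr \<nu> * (gc \<nu> k * ((z / 2)\<^sup>2) ^ k)"
    unfolding pw gc_def by simp
  then have "besselJ \<nu> z = (\<Sum>k. (z / 2) powr \<nu> * (gc \<nu> k * ((z / 2)\<^sup>2) ^ k))"
    unfolding besselJ_def by simp
  also have "\<dots> = (z / 2) powr \<nu> * gser \<nu> ((z / 2)\<^sup>2)"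
    unfolding gser_def by (intro suminf_mult gc_summable assms)
  finally show ?thesis .
qed

definition gser1 :: "real \<Rightarrow> real \<Rightarrow> real" where
  "gser1 \<nu> w = (\<Sum>k. diffs (gc \<nu>) k * w ^ k)"
definition gser2 :: "real \<Rightarrow> real \<Rightarrow> real" where
  "gser2 \<nu> w = (\<Sum>k. diffs (diffs (gc \<nu>)) k * w ^ k)"

lemma gc1_summable: "\<nu> > -1 \<Longrightarrow> summable (\<lambda>k. diffs (gc \<nu>) k * w ^ k)"
  by (intro termdiff_converges_all gc_summable)
lemma gc2_summable: "\<nu> > -1 \<Longrightarrow> summable (\<lambda>k. diffs (diffs (gc \<nu>)) k * w ^ k)"
  by (intro termdiff_converges_all gc1_summable)

lemma gser_deriv: "\<nu> > -1 \<Longrightarrow> (gser \<nu> has_real_derivative gser1 \<nu> w) (at w)"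
  unfolding gser_def[abs_def] gser1_def
  by (intro termdiffs_strong_converges_everywhere gc_summable)
lemma gser1_deriv: "\<nu> > -1 \<Longrightarrow> (gser1 \<nu> has_real_derivative gser2 \<nu> w) (at w)"
  unfolding gser1_def[abs_def] gser2_def
  by (intro termdiffs_strong_converges_everywhere gc1_summable)

lemma gser_ode:
  assumes "\<nu> > -1"
  shows "w * gser2 \<nu> w + (\<nu> + 1) * gser1 \<nu> w + gser \<nu> w = 0"
proof -
  define c where "c = gc \<nu>"
  define d where "d = diffs c"
  define f where "f m = real m * d m * w ^ m" for m
  have "(\<lambda>n. diffs d n * w ^ n * w) sums (gser2 \<nu> w * w)"
    unfolding gser2_def d_def c_def by (intro sums_mult2 summable_sums gc2_summable assms)
  moreover have "(\<lambda>n. diffs d n * w ^ n * w) = (\<lambda>n. f (Suc n))"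
    unfolding f_def diffs_def by (auto simp: field_simps)
  ultimately have "(\<lambda>n. f (Suc n)) sums (gser2 \<nu> w * w)" by simp
  then have s1: "f sums (gser2 \<nu> w * w)"
    using sums_Suc_iff[of f "gser2 \<nu> w * w"] by (simp add: f_def)
  have s2: "(\<lambda>n. (\<nu> + 1) * (d n * w ^ n)) sums ((\<nu> + 1) * gser1 \<nu> w)"
    unfolding gser1_def d_def c_def by (intro sums_mult summable_sums gc1_summable assms)
  have s3: "(\<lambda>n. c n * w ^ n) sums (gser \<nu> w)"
    unfolding gser_def c_def by (intro summable_sums gc_summable assms)
  have "(\<lambda>n. f n + (\<nu> + 1) * (d n * w ^ n) + c n * w ^ n) sums
          (gser2 \<nu> w * w + (\<nu> + 1) * gser1 \<nu> w + gser \<nu> w)"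
    by (intro sums_add s1 s2 s3)
  moreover have "(\<lambda>n. f n + (\<nu> + 1) * (d n * w ^ n) + c n * w ^ n) = (\<lambda>n. 0)"
  proof
    fix m :: nat
    have r: "(real m + \<nu> + 1) * rGamma (real m + \<nu> + 1 + 1) = rGamma (real m + \<nu> + 1)"
      by (rule rGamma_plus1)
    have "f m + (\<nu> + 1) * (d m * w ^ m) + c m * w ^ m
       = w ^ m * ((real m + \<nu> + 1) * (real (Suc m) * c (Suc m)) + c m)"
      unfolding f_def d_def diffs_def by (simp add: algebra_simps)
    also have "real (Suc m) * c (Suc m) = - ((-1) ^ m * rGamma (real m + \<nu> + 1 + 1) / fact m)"
    proof -
      have fs: "(fact (Suc m) :: real) = real (Suc m) * fact m" by (rule fact_Suc)
      have pos: "real (Suc m) > 0" "(fact m :: real) > 0" by auto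
      show ?thesis unfolding c_def gc_def fs
        using pos by (simp add: add_ac)
    qed
    also have "(real m + \<nu> + 1) * - ((-1) ^ m * rGamma (real m + \<nu> + 1 + 1) / fact m) + c m = 0"
      unfolding c_def gc_def using r
      by (simp add: field_simps)
    finally show "f m + (\<nu> + 1) * (d m * w ^ m) + c m * w ^ m = 0" by simp
  qed
  ultimately have "(\<lambda>n. 0::real) sums (gser2 \<nu> w * w + (\<nu> + 1) * gser1 \<nu> w + gser \<nu> w)" by simp
  then show ?thesis using sums_zero sums_unique2 by (metis mult.commute)
qed

definition uf :: "real \<Rightarrow> real \<Rightarrow> real" where
  "uf \<nu> z = z powr (\<nu> + 1/2) * gser \<nu> ((z / 2)\<^sup>2)"
definition uf1 :: "real \<Rightarrow> real \<Rightarrow> real" where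
  "uf1 \<nu> z = (\<nu> + 1/2) * z powr (\<nu> + 1/2 - 1) * gser \<nu> ((z / 2)\<^sup>2)
     + z powr (\<nu> + 1/2) * (gser1 \<nu> ((z / 2)\<^sup>2) * (z / 2))"

lemma sq_deriv: "((\<lambda>z::real. (z / 2)\<^sup>2) has_real_derivative z / 2) (at z)"
  by (auto intro!: derivative_eq_intros simp: field_simps)

lemma G_deriv: "\<nu> > -1 \<Longrightarrow> ((\<lambda>z. gser \<nu> ((z / 2)\<^sup>2)) has_real_derivative gser1 \<nu> ((z / 2)\<^sup>2) * (z / 2)) (at z)"
  by (rule DERIV_chain2[OF gser_deriv sq_deriv])
lemma G1_deriv: "\<nu> > -1 \<Longrightarrow> ((\<lambda>z. gser1 \<nu> ((z / 2)\<^sup>2)) has_real_derivative gser2 \<nu> ((z / 2)\<^sup>2) * (z / 2)) (at z)"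
  by (rule DERIV_chain2[OF gser1_deriv sq_deriv])

lemma uf_deriv:
  assumes "\<nu> > -1" "z > 0"
  shows "(uf \<nu> has_real_derivative uf1 \<nu> z) (at z)"
  unfolding uf_def[abs_def] uf1_def
  by (rule DERIV_cong, rule DERIV_mult[OF has_real_derivative_powr[OF assms(2)] G_deriv[OF assms(1)]])
     (simp add: algebra_simps)

lemma uf1_deriv:
  assumes "\<nu> > -1" "z > 0"
  shows "(uf1 \<nu> has_real_derivative ((\<nu> + 1/2) * (\<nu> - 1/2) / z\<^sup>2 - 1) * uf \<nu> z) (at z)"
proof -
  define p where "p = \<nu> + 1/2"
  define G where "G = gser \<nu> ((z / 2)\<^sup>2)"
  define G1 where "G1 = gser1 \<nu> ((z / 2)\<^sup>2)"
  define G2 where "G2 = gser2 \<nu> ((z / 2)\<^sup>2)"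
  have ode: "(z / 2)\<^sup>2 * G2 = - (\<nu> + 1) * G1 - G"
    using gser_ode[OF assms(1), of "(z / 2)\<^sup>2"] unfolding G_def G1_def G2_def by (simp add: algebra_simps)
  have d1: "((\<lambda>z. p * z powr (p - 1) * gser \<nu> ((z / 2)\<^sup>2)) has_real_derivative
      p * ((p - 1) * z powr (p - 1 - 1)) * G + p * z powr (p - 1) * (G1 * (z / 2))) (at z)"
    unfolding G_def G1_def
    by (rule DERIV_cong, rule DERIV_mult[OF DERIV_cmult[OF has_real_derivative_powr[OF assms(2)]] G_deriv[OF assms(1)]])
       (simp add: algebra_simps)
  have d2: "((\<lambda>z. z powr p * (gser1 \<nu> ((z / 2)\<^sup>2) * (z / 2))) has_real_derivative
      p * z powr (p - 1) * (G1 * (z / 2)) + z powr p * (G2 * (z / 2) * (z / 2) + G1 * (1 / 2))) (at z)"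
    unfolding G1_def G2_def
    by (rule DERIV_cong, rule DERIV_mult[OF has_real_derivative_powr[OF assms(2)]
          DERIV_mult[OF G1_deriv[OF assms(1)] DERIV_cdivide[OF DERIV_ident]]])
       (simp add: algebra_simps)
  have d: "(uf1 \<nu> has_real_derivative
      (p * ((p - 1) * z powr (p - 1 - 1)) * G + p * z powr (p - 1) * (G1 * (z / 2))) +
      (p * z powr (p - 1) * (G1 * (z / 2)) + z powr p * (G2 * (z / 2) * (z / 2) + G1 * (1 / 2)))) (at z)"
    unfolding uf1_def[abs_def] p_def[symmetric] by (rule DERIV_add[OF d1 d2])
  have e1: "z powr (p - 1) = z powr p / z" using assms(2) by (simp add: powr_diff)
  have e2: "z powr (p - 1 - 1) = z powr p / z\<^sup>2" using assms(2)
    by (simp add: powr_diff power2_eq_square)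
  have "(p * ((p - 1) * z powr (p - 1 - 1)) * G + p * z powr (p - 1) * (G1 * (z / 2))) +
      (p * z powr (p - 1) * (G1 * (z / 2)) + z powr p * (G2 * (z / 2) * (z / 2) + G1 * (1 / 2)))
      = z powr p * (p * (p - 1) / z\<^sup>2 * G + p * G1 + (z / 2)\<^sup>2 * G2 + G1 / 2)"
    unfolding e1 e2 using assms(2) by (simp add: field_simps power2_eq_square)
  also have "\<dots> = ((\<nu> + 1/2) * (\<nu> - 1/2) / z\<^sup>2 - 1) * uf \<nu> z"
    unfolding ode uf_def G_def[symmetric] p_def using assms(2) by (simp add: field_simps)
  finally show ?thesis using d by simp
qed

lemma q_deriv: "z > 0 \<Longrightarrow> ((\<lambda>z. 1 - c / z\<^sup>2) has_real_derivative 2 * c / z ^ 3) (at z)"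
  by (auto intro!: derivative_eq_intros simp: field_simps power2_eq_square power3_eq_cube)

lemma uf_bound_large:
  assumes "\<nu> > -1"
  shows "\<exists>Z\<ge>1. \<exists>M. \<forall>z\<ge>Z. (uf \<nu> z)\<^sup>2 \<le> M"
proof -
  define c where "c = (\<nu> + 1/2) * (\<nu> - 1/2)"
  define u where "u = uf \<nu>"
  define u1 where "u1 = uf1 \<nu>"
  have ud: "(u has_real_derivative u1 z) (at z)" if "z > 0" for z
    unfolding u_def u1_def using uf_deriv[OF assms that] .
  have u1d: "(u1 has_real_derivative (c / z\<^sup>2 - 1) * u z) (at z)" if "z > 0" for z
    unfolding u_def u1_def c_def using uf1_deriv[OF assms that] .
  show ?thesis
  proof (cases "c \<le> 0")
    case True
    define F where "F z = (1 - c / z\<^sup>2) * (u z * u z) + u1 z * u1 z" for z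
    have Fd: "(F has_real_derivative 2 * c / z ^ 3 * (u z * u z)) (at z)" if "z > 0" for z
      unfolding F_def[abs_def]
      by (rule DERIV_cong, rule DERIV_add[OF DERIV_mult[OF q_deriv[OF that] DERIV_mult[OF ud[OF that] ud[OF that]]]
            DERIV_mult[OF u1d[OF that] u1d[OF that]]])
         (use that in \<open>simp add: field_simps power2_eq_square\<close>)
    have "(u z)\<^sup>2 \<le> F 1" if "z \<ge> 1" for z
    proof -
      have "F z \<le> F 1"
      proof (rule DERIV_nonpos_imp_nonincreasing[OF that])
        fix x :: real assume "1 \<le> x" "x \<le> z"
        then have "x > 0" by auto
        moreover have "2 * c / x ^ 3 * (u x * u x) \<le> 0"
        proof (rule mult_nonpos_nonneg)
          show "2 * c / x ^ 3 \<le> 0" using True \<open>x > 0\<close> by (simp add: divide_nonpos_pos)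
        qed simp
        ultimately show "\<exists>y. (F has_real_derivative y) (at x) \<and> y \<le> 0" using Fd by blast
      qed
      moreover have "(u z)\<^sup>2 \<le> F z"
      proof -
        have "1 * (u z * u z) \<le> (1 - c / z\<^sup>2) * (u z * u z)"
          using True that by (intro mult_right_mono) (auto simp: divide_nonpos_pos)
        moreover have "0 \<le> u1 z * u1 z" by simp
        ultimately show ?thesis unfolding F_def power2_eq_square by linarith
      qed
      ultimately show ?thesis by simp
    qed
    then show ?thesis unfolding u_def by (intro exI[of _ 1]) auto
  next
    case False
    define Z where "Z = 1 + 2 * c"
    define q where "q z = 1 - c / z\<^sup>2" for z
    have qpos: "q z \<ge> 1/2" if "z \<ge> Z" for z
    proof -
      have "z\<^sup>2 \<ge> z" using that False unfolding Z_def by (simp add: power2_eq_square)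
      then have "z\<^sup>2 \<ge> 2 * c" using that unfolding Z_def by simp
      moreover have "z\<^sup>2 > 0" using that False unfolding Z_def by simp
      ultimately have "c / z\<^sup>2 \<le> 1/2" by (simp add: divide_le_eq)
      then show ?thesis unfolding q_def by simp
    qed
    define E where "E z = u z * u z + u1 z * u1 z / q z" for z
    have Ed: "(E has_real_derivative - (u1 z * u1 z) * (2 * c / z ^ 3) / (q z * q z)) (at z)"
      if "z \<ge> Z" for z
    proof -
      have z0: "z > 0" using that False unfolding Z_def by simp
      have qd: "(q has_real_derivative 2 * c / z ^ 3) (at z)" unfolding q_def[abs_def] by (rule q_deriv[OF z0])
      have qn: "q z \<noteq> 0" using qpos[OF that] by simp
      have "(E has_real_derivative (u1 z * u z + u1 z * u z) +
          (((c / z\<^sup>2 - 1) * u z * u1 z + (c / z\<^sup>2 - 1) * u z * u1 z) * q z - u1 z * u1 z * (2 * c / z ^ 3))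
            / (q z * q z)) (at z)"
        unfolding E_def[abs_def]
        by (rule DERIV_cong, rule DERIV_add[OF DERIV_mult[OF ud[OF z0] ud[OF z0]] DERIV_divide[OF DERIV_mult[OF u1d[OF z0] u1d[OF z0]] qd qn]]) simp
      moreover have "(c / z\<^sup>2 - 1) = - q z" unfolding q_def by simp
      ultimately show ?thesis using qn by (simp add: field_simps)
    qed
    have "(u z)\<^sup>2 \<le> E Z" if "z \<ge> Z" for z
    proof -
      have "E z \<le> E Z"
      proof (rule DERIV_nonpos_imp_nonincreasing[OF that])
        fix x :: real assume "Z \<le> x" "x \<le> z"
        then have x0: "x > 0" using False unfolding Z_def by simp
        have "0 \<le> (u1 x * u1 x) * (2 * c / x ^ 3) / (q x * q x)"
        proof (rule divide_nonneg_nonneg[OF mult_nonneg_nonneg])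
          show "0 \<le> 2 * c / x ^ 3" using False x0 by simp
        qed simp_all
        then have "- (u1 x * u1 x) * (2 * c / x ^ 3) / (q x * q x) \<le> 0" by simp
        then show "\<exists>y. (E has_real_derivative y) (at x) \<and> y \<le> 0" using Ed[OF \<open>Z \<le> x\<close>] by blast
      qed
      moreover have "(u z)\<^sup>2 \<le> E z"
        using qpos[OF that] unfolding E_def by (simp add: power2_eq_square)
      ultimately show ?thesis by simp
    qed
    moreover have "Z \<ge> 1" using False unfolding Z_def by simp
    ultimately show ?thesis unfolding u_def by blast
  qed
qed

lemma g_bound_split:
  assumes "\<nu> > -1"
  shows "\<exists>Z\<ge>1. \<exists>G M. (\<forall>z. 0 < z \<and> z \<le> Z \<longrightarrow> \<bar>gser \<nu> ((z / 2)\<^sup>2)\<bar> \<le> G) \<and>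
            (\<forall>z\<ge>Z. z powr (\<nu> + 1/2) * \<bar>gser \<nu> ((z / 2)\<^sup>2)\<bar> \<le> M)"
proof -
  obtain Z M where Z: "Z \<ge> 1" and M: "\<And>z. z \<ge> Z \<Longrightarrow> (uf \<nu> z)\<^sup>2 \<le> M"
    using uf_bound_large[OF assms] by blast
  have cont: "continuous_on {0..(Z/2)\<^sup>2} (gser \<nu>)"
    using gser_deriv[OF assms] by (intro continuous_at_imp_continuous_on) (blast intro: DERIV_isCont)
  have "bounded (gser \<nu> ` {0..(Z/2)\<^sup>2})"
    by (intro compact_imp_bounded compact_continuous_image cont compact_Icc)
  then obtain G where G: "\<And>w. w \<in> {0..(Z/2)\<^sup>2} \<Longrightarrow> norm (gser \<nu> w) \<le> G"
    unfolding bounded_iff by blast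
  have 1: "\<bar>gser \<nu> ((z / 2)\<^sup>2)\<bar> \<le> G" if "0 < z" "z \<le> Z" for z
  proof -
    have "(z/2)\<^sup>2 \<le> (Z/2)\<^sup>2" using that by (intro power_mono) auto
    then show ?thesis using G[of "(z/2)\<^sup>2"] by simp
  qed
  have 2: "z powr (\<nu> + 1/2) * \<bar>gser \<nu> ((z / 2)\<^sup>2)\<bar> \<le> sqrt M" if "z \<ge> Z" for z
  proof -
    have "sqrt ((uf \<nu> z)\<^sup>2) \<le> sqrt M" using M[OF that] by (rule real_sqrt_le_mono)
    then have "\<bar>uf \<nu> z\<bar> \<le> sqrt M" by simp
    then show ?thesis unfolding uf_def by (simp add: abs_mult)
  qed
  show ?thesis using Z 1 2 by blast
qed

lemma g_bound_pos:
  assumes "\<nu> \<ge> -1/2"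
  shows "\<exists>K>0. \<forall>z>0. \<bar>gser \<nu> ((z / 2)\<^sup>2)\<bar> \<le> K"
proof -
  have nu: "\<nu> > -1" using assms by simp
  obtain Z G M where Z: "Z \<ge> 1" and GM: "\<forall>z. 0 < z \<and> z \<le> Z \<longrightarrow> \<bar>gser \<nu> ((z / 2)\<^sup>2)\<bar> \<le> G"
    "\<forall>z\<ge>Z. z powr (\<nu> + 1/2) * \<bar>gser \<nu> ((z / 2)\<^sup>2)\<bar> \<le> M"
    using g_bound_split[OF nu] by blast
  have G: "\<And>z. 0 < z \<Longrightarrow> z \<le> Z \<Longrightarrow> \<bar>gser \<nu> ((z / 2)\<^sup>2)\<bar> \<le> G" using GM(1) by blast
  have M: "\<And>z. z \<ge> Z \<Longrightarrow> z powr (\<nu> + 1/2) * \<bar>gser \<nu> ((z / 2)\<^sup>2)\<bar> \<le> M" using GM(2) by blast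
  have "\<bar>gser \<nu> ((z / 2)\<^sup>2)\<bar> \<le> max 1 (max G M)" if "z > 0" for z
  proof (cases "z \<le> Z")
    case True then show ?thesis using G[OF that] by simp
  next
    case False
    then have "z \<ge> 1" using Z by simp
    then have "1 \<le> z powr (\<nu> + 1/2)" using assms by (intro ge_one_powr_ge_zero) auto
    then have "1 * \<bar>gser \<nu> ((z / 2)\<^sup>2)\<bar> \<le> z powr (\<nu> + 1/2) * \<bar>gser \<nu> ((z / 2)\<^sup>2)\<bar>"
      by (intro mult_right_mono) auto
    then show ?thesis using M[of z] False by simp
  qed
  then show ?thesis by (intro exI[of _ "max 1 (max G M)"]) auto
qed

lemma g_bound_neg:
  assumes "\<nu> > -1"
  shows "\<exists>K>0. \<forall>z>0. \<bar>gser \<nu> ((z / 2)\<^sup>2)\<bar> \<le> K * (1 + z powr (- (\<nu> + 1/2)))"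
proof -
  have nu: "\<nu> > -1" using assms by simp
  obtain Z G M where Z: "Z \<ge> 1" and GM: "\<forall>z. 0 < z \<and> z \<le> Z \<longrightarrow> \<bar>gser \<nu> ((z / 2)\<^sup>2)\<bar> \<le> G"
    "\<forall>z\<ge>Z. z powr (\<nu> + 1/2) * \<bar>gser \<nu> ((z / 2)\<^sup>2)\<bar> \<le> M"
    using g_bound_split[OF nu] by blast
  have G: "\<And>z. 0 < z \<Longrightarrow> z \<le> Z \<Longrightarrow> \<bar>gser \<nu> ((z / 2)\<^sup>2)\<bar> \<le> G" using GM(1) by blast
  have M: "\<And>z. z \<ge> Z \<Longrightarrow> z powr (\<nu> + 1/2) * \<bar>gser \<nu> ((z / 2)\<^sup>2)\<bar> \<le> M" using GM(2) by blast
  define K where "K = max 1 (max G M)"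
  have "\<bar>gser \<nu> ((z / 2)\<^sup>2)\<bar> \<le> K * (1 + z powr (- (\<nu> + 1/2)))" if "z > 0" for z
  proof -
    have pp: "z powr (- (\<nu> + 1/2)) \<ge> 0" by simp
    have K1: "K \<ge> 1" unfolding K_def by simp
    show ?thesis
    proof (cases "z \<le> Z")
      case True
      then have "\<bar>gser \<nu> ((z / 2)\<^sup>2)\<bar> \<le> K" using G[OF that] unfolding K_def by simp
      also have "K \<le> K * (1 + z powr (- (\<nu> + 1/2)))" using K1 pp by simp
      finally show ?thesis .
    next
      case False
      have e: "z powr (- (\<nu> + 1/2)) * z powr (\<nu> + 1/2) = 1" using that
        by (simp add: powr_add[symmetric])
      have "\<bar>gser \<nu> ((z / 2)\<^sup>2)\<bar> = z powr (- (\<nu> + 1/2)) * (z powr (\<nu> + 1/2) * \<bar>gser \<nu> ((z / 2)\<^sup>2)\<bar>)"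
        using e by (simp add: mult.assoc[symmetric])
      also have "\<dots> \<le> z powr (- (\<nu> + 1/2)) * K"
        using M[of z] False unfolding K_def by (intro mult_left_mono) auto
      also have "\<dots> \<le> K * (1 + z powr (- (\<nu> + 1/2)))" using K1 pp by (simp add: algebra_simps)
      finally show ?thesis .
    qed
  qed
  moreover have "K > 0" unfolding K_def by simp
  ultimately show ?thesis by blast
qed

lemma set_int_lborel_from_abs:
  fixes f :: "real \<Rightarrow> real"
  assumes "f absolutely_integrable_on S" "S \<in> sets borel" "continuous_on S f"
  shows "set_integrable lborel S f"
proof -
  have m: "(\<lambda>x. indicator S x *\<^sub>R f x) \<in> borel_measurable lborel"
    using borel_measurable_continuous_on_indicator[OF assms(2,3)] by simp
  show ?thesis using assms(1) integrable_completion[OF m] unfolding set_integrable_def by simp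
qed

lemma powr_int_01:
  assumes "a > -1"
  shows "set_integrable lborel {0<..1::real} (\<lambda>y. y powr a)"
proof (rule set_int_lborel_from_abs)
  show "(\<lambda>y. y powr a) absolutely_integrable_on {0<..1::real}"
    by (rule nonnegative_absolutely_integrable_1[OF integrable_on_powr_from_0'[OF assms]]) auto
qed (auto intro!: continuous_intros)

lemma powr_int_1inf:
  "set_integrable lborel {(1::real)<..} (\<lambda>y. y powr (-2))"
proof -
  have "(\<lambda>y. y powr (-2)) integrable_on {(1::real)..}"
    using has_integral_powr_to_inf[of "-2" 1] unfolding integrable_on_def by auto
  then have "(\<lambda>y. y powr (-2)) absolutely_integrable_on {(1::real)..}"
    by (rule nonnegative_absolutely_integrable_1) auto
  then have "set_integrable lborel {(1::real)..} (\<lambda>y. y powr (-2))"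
    by (rule set_int_lborel_from_abs) (auto intro!: continuous_intros)
  then show ?thesis by (rule set_integrable_subset) auto
qed

lemma dom_int:
  fixes h :: "real \<Rightarrow> real"
  assumes a: "a > -1" and b: "b > -1" and hc: "continuous_on {0<..} h"
    and h1: "\<And>y. 0 < y \<Longrightarrow> y \<le> 1 \<Longrightarrow> \<bar>h y\<bar> \<le> B0 * y powr a + B1 * y powr b"
    and h2: "\<And>y. 1 < y \<Longrightarrow> \<bar>h y\<bar> \<le> B2 * y powr (-2)"
  shows "set_integrable lborel {0<..} h"
proof -
  have "set_integrable lborel ({0<..1} \<union> {1<..}) h"
  proof (rule set_integrable_Un)
    have i1: "set_integrable lborel {0<..1} (\<lambda>y. B0 * y powr a + B1 * y powr b)"
      using powr_int_01[OF a] powr_int_01[OF b] by (intro set_integral_add) auto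
    show "set_integrable lborel {0<..1} h"
    proof (rule set_integrable_bound[OF i1])
      show "set_borel_measurable lborel {0<..1} h"
        unfolding set_borel_measurable_def
      proof -
        have "continuous_on {0<..1} h" by (rule continuous_on_subset[OF hc]) auto
        then show "(\<lambda>x. indicator {0<..1} x *\<^sub>R h x) \<in> borel_measurable lborel"
          using borel_measurable_continuous_on_indicator[of "{0<..1}" h] by simp
      qed
      show "AE x in lborel. x \<in> {0<..1} \<longrightarrow> norm (h x) \<le> norm (B0 * x powr a + B1 * x powr b)"
        using h1 by (intro AE_I2) force
    qed
    have i2: "set_integrable lborel {1<..} (\<lambda>y. B2 * y powr (-2))"
      using powr_int_1inf by auto
    show "set_integrable lborel {1<..} h"
    proof (rule set_integrable_bound[OF i2])
      show "set_borel_measurable lborel {1<..} h"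
        unfolding set_borel_measurable_def
      proof -
        have "continuous_on {1<..} h" by (rule continuous_on_subset[OF hc]) auto
        then show "(\<lambda>x. indicator {1<..} x *\<^sub>R h x) \<in> borel_measurable lborel"
          using borel_measurable_continuous_on_indicator[of "{1<..}" h] by simp
      qed
      show "AE x in lborel. x \<in> {1<..} \<longrightarrow> norm (h x) \<le> norm (B2 * x powr (-2))"
        using h2 by (intro AE_I2) force
    qed
  qed auto
  moreover have "{0<..1} \<union> {1<..} = {0::real<..}" by auto
  ultimately show ?thesis by simp
qed

lemma schwartz_cont: "schwartz_plus \<phi> \<Longrightarrow> continuous_on {0<..} \<phi>"
  unfolding schwartz_plus_def
  by (intro continuous_at_imp_continuous_on ballI differentiable_imp_continuous_within)
     (metis funpow_0 greaterThan_iff)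

lemma schwartz_decay:
  assumes "schwartz_plus \<phi>"
  shows "\<exists>B. \<forall>x>0. norm (\<phi> x) * x ^ m \<le> B"
proof -
  obtain B where "\<forall>x>0. norm ((x ^ m) *\<^sub>R ((Dop ^^ 0) \<phi> x)) \<le> B"
    using assms unfolding schwartz_plus_def by blast
  then show ?thesis by (intro exI[of _ B]) (auto simp: mult.commute)
qed

lemma kernel_norm:
  assumes "t \<noteq> 0" "x > 0" "y > 0" "a > -1"
  shows "norm (S_kernel a x y t) =
    (2 * \<bar>t\<bar>) powr (- (a + 1) / 2) * (\<bar>gser ((a - 1) / 2) ((x * y / (2 * \<bar>t\<bar>) / 2)\<^sup>2)\<bar> / 2 powr ((a - 1) / 2))"
proof -
  define z where "z = x * y / (2 * \<bar>t\<bar>)"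
  define g where "g = gser ((a - 1) / 2) ((z / 2)\<^sup>2)"
  have z0: "z > 0" unfolding z_def using assms by simp
  have n1: "norm (if t > 0 then cis (- (a + 1) * pi / 4) else cis ((a + 1) * pi / 4)) = 1" by simp
  have n2: "norm (if t > 0 then cis ((x\<^sup>2 + y\<^sup>2) / (4 * \<bar>t\<bar>)) else cis (- (x\<^sup>2 + y\<^sup>2) / (4 * \<bar>t\<bar>))) = 1" by simp
  have bj: "besselJ ((a - 1) / 2) z = (z / 2) powr ((a - 1) / 2) * g"
    unfolding g_def using assms z0 by (intro besselJ_eq) auto
  have e: "z powr ((1 - a) / 2) * (z / 2) powr ((a - 1) / 2) = 1 / 2 powr ((a - 1) / 2)"
  proof -
    have "z powr ((1 - a) / 2) * (z / 2) powr ((a - 1) / 2) = z powr ((1 - a) / 2) * z powr ((a - 1) / 2) / 2 powr ((a - 1) / 2)"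
      using z0 by (simp add: powr_divide)
    also have "z powr ((1 - a) / 2) * z powr ((a - 1) / 2) = z powr ((1 - a) / 2 + (a - 1) / 2)"
      by (simp add: powr_add)
    also have "(1 - a) / 2 + (a - 1) / 2 = 0" by (simp add: field_simps)
    finally show ?thesis using z0 by simp
  qed
  have "norm (S_kernel a x y t) = \<bar>(2 * \<bar>t\<bar>) powr (- (a + 1) / 2) * z powr ((1 - a) / 2) * besselJ ((a - 1) / 2) z\<bar>"
    unfolding S_kernel_def z_def[symmetric] norm_mult n1 n2 by (simp add: norm_mult abs_mult)
  also have "\<dots> = \<bar>(2 * \<bar>t\<bar>) powr (- (a + 1) / 2) * (z powr ((1 - a) / 2) * (z / 2) powr ((a - 1) / 2)) * g\<bar>"
    unfolding bj by (simp add: mult.assoc)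
  also have "\<dots> = (2 * \<bar>t\<bar>) powr (- (a + 1) / 2) * (\<bar>g\<bar> / 2 powr ((a - 1) / 2))"
    unfolding e by (simp add: abs_mult)
  finally show ?thesis unfolding g_def z_def .
qed

lemma integral_bound_gen:
  fixes f :: "real \<Rightarrow> complex" and h :: "real \<Rightarrow> real"
  assumes hi: "set_integrable lborel A h" and c: "c \<ge> 0"
    and hn: "\<And>y. y \<in> A \<Longrightarrow> h y \<ge> 0"
    and b: "\<And>y. y \<in> A \<Longrightarrow> norm (f y) \<le> c * h y"
  shows "norm (\<integral>y\<in>A. f y \<partial>lborel) \<le> c * (\<integral>y\<in>A. h y \<partial>lborel)"
proof -
  have "norm (\<integral>y\<in>A. f y \<partial>lborel) \<le> (\<integral>y. norm (indicator A y *\<^sub>R f y) \<partial>lborel)"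
    unfolding set_lebesgue_integral_def by (rule integral_norm_bound)
  also have "\<dots> \<le> (\<integral>y. indicator A y *\<^sub>R (c * h y) \<partial>lborel)"
  proof (rule integral_mono_AE')
    show "integrable lborel (\<lambda>y. indicator A y *\<^sub>R (c * h y))"
      using set_integrable_mult_right[of c lborel A h] hi unfolding set_integrable_def by simp
    show "AE x in lborel. norm (indicator A x *\<^sub>R f x) \<le> indicator A x *\<^sub>R (c * h x)"
      using b by (intro AE_I2) (auto simp: indicator_def)
    show "AE x in lborel. 0 \<le> indicator A x *\<^sub>R (c * h x)"
      using hn c by (intro AE_I2) (auto simp: indicator_def)
  qed
  also have "\<dots> = c * (\<integral>y\<in>A. h y \<partial>lborel)"
    unfolding set_lebesgue_integral_def
  proof -
    have "(\<lambda>y. indicator A y *\<^sub>R (c * h y)) = (\<lambda>y. c * (indicator A y *\<^sub>R h y))"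
      by (auto simp: indicator_def)
    then show "(\<integral>y. indicator A y *\<^sub>R (c * h y) \<partial>lborel) = c * (\<integral>y. indicator A y *\<^sub>R h y \<partial>lborel)"
      by (simp only: integral_mult_right_zero)
  qed
  finally show ?thesis .
qed

lemma two_abs_powr:
  fixes t e :: real
  assumes "t \<noteq> 0" "e \<le> 0"
  shows "(2 * \<bar>t\<bar>) powr e \<le> \<bar>t\<bar> powr e"
proof -
  have "(2 * \<bar>t\<bar>) powr e = 2 powr e * \<bar>t\<bar> powr e" by (simp add: powr_mult)
  moreover have "2 powr e \<le> 1"
    using powr_mono[of e 0 2] assms by simp
  ultimately show ?thesis by (simp add: mult_left_le_one_le)
qed

lemma partI:
  assumes a: "(a::real) \<ge> 0"
  shows "\<exists>C>0. \<forall>t \<phi>. t \<noteq> 0 \<and> schwartz_plus \<phi> \<longrightarrow>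
              (AE x in lborel. x > 0 \<longrightarrow>
                 norm (S_op a t \<phi> x) \<le>
                   C * \<bar>t\<bar> powr (- (a + 1) / 2) *
                   (\<integral>y\<in>{0<..}. norm (\<phi> y) * y powr a \<partial>lborel))"
proof -
  obtain K where K: "K > 0" "\<And>z. z > 0 \<Longrightarrow> \<bar>gser ((a - 1) / 2) ((z / 2)\<^sup>2)\<bar> \<le> K"
    using g_bound_pos[of "(a - 1) / 2"] a by auto
  define C where "C = K / 2 powr ((a - 1) / 2)"
  have C0: "C > 0" unfolding C_def using K by simp
  have "t \<noteq> 0 \<and> schwartz_plus \<phi> \<longrightarrow>
              (AE x in lborel. x > 0 \<longrightarrow>
                 norm (S_op a t \<phi> x) \<le>
                   C * \<bar>t\<bar> powr (- (a + 1) / 2) *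
                   (\<integral>y\<in>{0<..}. norm (\<phi> y) * y powr a \<partial>lborel))" for t \<phi>
  proof (intro impI AE_I2)
    fix x :: real
    assume H: "t \<noteq> 0 \<and> schwartz_plus \<phi>" and x: "x > 0"
    then have t: "t \<noteq> 0" and sp: "schwartz_plus \<phi>" by auto
    define m where "m = nat \<lceil>a\<rceil> + 2"
    obtain B0 where B0: "\<And>y. y > 0 \<Longrightarrow> norm (\<phi> y) * y ^ 0 \<le> B0"
      using schwartz_decay[OF sp, of 0] by blast
    obtain Bm where Bm: "\<And>y. y > 0 \<Longrightarrow> norm (\<phi> y) * y ^ m \<le> Bm"
      using schwartz_decay[OF sp, of m] by blast
    have hi: "set_integrable lborel {0<..} (\<lambda>y. norm (\<phi> y) * y powr a)"
    proof (rule dom_int[of a a])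
      show "continuous_on {0<..} (\<lambda>y. norm (\<phi> y) * y powr a)"
        using schwartz_cont[OF sp] by (intro continuous_intros) auto
      show "\<bar>norm (\<phi> y) * y powr a\<bar> \<le> B0 * y powr a + 0 * y powr a" if "0 < y" "y \<le> 1" for y
        using B0[OF that(1)] that by (simp add: abs_mult mult_right_mono)
      show "\<bar>norm (\<phi> y) * y powr a\<bar> \<le> Bm * y powr (-2)" if "1 < y" for y
      proof -
        have y0: "y > 0" using that by simp
        have "norm (\<phi> y) \<le> Bm / y ^ m" using Bm[OF y0] y0 by (simp add: field_simps)
        then have "norm (\<phi> y) * y powr a \<le> Bm / y ^ m * y powr a"
          by (intro mult_right_mono) auto
        also have "Bm / y ^ m * y powr a = Bm * y powr (a - real m)"
          using y0 by (simp add: powr_diff powr_realpow)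
        also have "\<dots> \<le> Bm * y powr (-2)"
        proof (rule mult_left_mono)
          show "y powr (a - real m) \<le> y powr (-2)"
            using that unfolding m_def by (intro powr_mono) (auto, linarith)
          show "0 \<le> Bm" using Bm[OF y0] by (smt (verit) mult_nonneg_nonneg norm_ge_zero zero_le_power y0)
        qed
        finally show ?thesis by (simp add: abs_mult)
      qed
    qed (use a in auto)
    have "norm (S_op a t \<phi> x) \<le> (C * \<bar>t\<bar> powr (- (a + 1) / 2)) *
                   (\<integral>y\<in>{0<..}. norm (\<phi> y) * y powr a \<partial>lborel)"
      unfolding S_op_def
    proof (rule integral_bound_gen[OF hi])
      show "0 \<le> C * \<bar>t\<bar> powr (- (a + 1) / 2)" using C0 by simp
      show "0 \<le> norm (\<phi> y) * y powr a" for y by simp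
      fix y :: real assume "y \<in> {0<..}"
      then have y: "y > 0" by simp
      have nK: "norm (S_kernel a x y t) \<le> C * \<bar>t\<bar> powr (- (a + 1) / 2)"
      proof -
        have "norm (S_kernel a x y t) =
           (2 * \<bar>t\<bar>) powr (- (a + 1) / 2) * (\<bar>gser ((a - 1) / 2) ((x * y / (2 * \<bar>t\<bar>) / 2)\<^sup>2)\<bar> / 2 powr ((a - 1) / 2))"
          using kernel_norm[OF t x y] a by simp
        also have "\<dots> \<le> \<bar>t\<bar> powr (- (a + 1) / 2) * C"
          unfolding C_def
        proof (rule mult_mono)
          show "(2 * \<bar>t\<bar>) powr (- (a + 1) / 2) \<le> \<bar>t\<bar> powr (- (a + 1) / 2)"
            using t a by (intro two_abs_powr) auto
          show "\<bar>gser ((a - 1) / 2) ((x * y / (2 * \<bar>t\<bar>) / 2)\<^sup>2)\<bar> / 2 powr ((a - 1) / 2) \<le> K / 2 powr ((a - 1) / 2)"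
            using K(2)[of "x * y / (2 * \<bar>t\<bar>)"] x y t by (intro divide_right_mono) auto
        qed auto
        finally show ?thesis by (simp add: mult.commute)
      qed
      have "norm (y powr a *\<^sub>R (S_kernel a x y t * \<phi> y)) = y powr a * (norm (S_kernel a x y t) * norm (\<phi> y))"
        by (simp add: norm_mult)
      also have "\<dots> \<le> y powr a * ((C * \<bar>t\<bar> powr (- (a + 1) / 2)) * norm (\<phi> y))"
        using nK by (intro mult_left_mono mult_right_mono) auto
      finally show "norm (y powr a *\<^sub>R (S_kernel a x y t * \<phi> y)) \<le> C * \<bar>t\<bar> powr (- (a + 1) / 2) * (norm (\<phi> y) * y powr a)"
        by (simp add: algebra_simps)
    qed
    then show "norm (S_op a t \<phi> x) \<le> C * \<bar>t\<bar> powr (- (a + 1) / 2) *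
                   (\<integral>y\<in>{0<..}. norm (\<phi> y) * y powr a \<partial>lborel)" by simp
  qed
  then show ?thesis using C0 by blast
qed

lemma aux_div: "(P::real) * (X / Q) = (P / Q) * X" by simp

lemma partII:
  assumes a: "- 1 < (a::real)" "a < 0"
  shows "\<exists>C>0. \<forall>t \<phi>. t \<noteq> 0 \<and> schwartz_plus \<phi> \<longrightarrow>
              (AE x in lborel. x > 0 \<longrightarrow>
                 norm (S_op a t \<phi> x * complex_of_real (k1 a x)) \<le>
                   C * (\<bar>t\<bar> powr (- (a + 1) / 2) + \<bar>t\<bar> powr (- 1 / 2)) *
                   (\<integral>y\<in>{0<..}. norm (\<phi> y) * u1 a y \<partial>lborel))"
proof -
  obtain K where K: "K > 0" "\<And>z. z > 0 \<Longrightarrow> \<bar>gser ((a - 1) / 2) ((z / 2)\<^sup>2)\<bar> \<le> K * (1 + z powr (- ((a - 1) / 2 + 1/2)))"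
    using g_bound_neg[of "(a - 1) / 2"] a by auto
  have ex: "- ((a - 1) / 2 + 1/2) = - a / 2" by (simp add: field_simps)
  define C where "C = K / 2 powr ((a - 1) / 2)"
  have C0: "C > 0" unfolding C_def using K by simp
  have u1ge: "y powr a \<le> u1 a y" "y powr (a / 2) \<le> u1 a y" for y unfolding u1_def by auto
  have "t \<noteq> 0 \<and> schwartz_plus \<phi> \<longrightarrow>
              (AE x in lborel. x > 0 \<longrightarrow>
                 norm (S_op a t \<phi> x * complex_of_real (k1 a x)) \<le>
                   C * (\<bar>t\<bar> powr (- (a + 1) / 2) + \<bar>t\<bar> powr (- 1 / 2)) *
                   (\<integral>y\<in>{0<..}. norm (\<phi> y) * u1 a y \<partial>lborel))" for t \<phi>
  proof (intro impI AE_I2)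
    fix x :: real
    assume H: "t \<noteq> 0 \<and> schwartz_plus \<phi>" and x: "x > 0"
    then have t: "t \<noteq> 0" and sp: "schwartz_plus \<phi>" by auto
    define T where "T = 2 * \<bar>t\<bar>"
    have T0: "T > 0" unfolding T_def using t by simp
    obtain B0 where B0: "\<And>y. y > 0 \<Longrightarrow> norm (\<phi> y) * y ^ 0 \<le> B0"
      using schwartz_decay[OF sp, of 0] by blast
    obtain B2 where B2: "\<And>y. y > 0 \<Longrightarrow> norm (\<phi> y) * y ^ 2 \<le> B2"
      using schwartz_decay[OF sp, of 2] by blast
    have hi: "set_integrable lborel {0<..} (\<lambda>y. norm (\<phi> y) * u1 a y)"
    proof (rule dom_int[of a "a / 2"])
      show "continuous_on {0<..} (\<lambda>y. norm (\<phi> y) * u1 a y)"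
        unfolding u1_def using schwartz_cont[OF sp] by (intro continuous_intros) auto
      show "\<bar>norm (\<phi> y) * u1 a y\<bar> \<le> B0 * y powr a + B0 * y powr (a / 2)" if "0 < y" "y \<le> 1" for y
      proof -
        have "u1 a y \<le> y powr a + y powr (a / 2)" unfolding u1_def by simp
        have "\<bar>norm (\<phi> y) * u1 a y\<bar> = norm (\<phi> y) * u1 a y"
          by (intro abs_of_nonneg mult_nonneg_nonneg) (auto simp: u1_def le_max_iff_disj)
        also have "\<dots> \<le> B0 * (y powr a + y powr (a / 2))"
        proof (rule mult_mono)
          show "norm (\<phi> y) \<le> B0" using B0[OF that(1)] by simp
          then show "0 \<le> B0" using norm_ge_zero[of "\<phi> y"] by linarith
          show "0 \<le> u1 a y" by (simp add: u1_def le_max_iff_disj)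
        qed fact
        finally show ?thesis by (simp add: algebra_simps)
      qed
      show "\<bar>norm (\<phi> y) * u1 a y\<bar> \<le> (2 * B2) * y powr (-2)" if "1 < y" for y
      proof -
        have y0: "y > 0" using that by simp
        have "y powr a \<le> y powr 0" "y powr (a / 2) \<le> y powr 0"
          using powr_mono[of a 0 y] powr_mono[of "a/2" 0 y] that a by auto
        then have "u1 a y \<le> 1" unfolding u1_def using y0 by simp
        have "norm (\<phi> y) \<le> B2 * y powr (-2)" using B2[OF y0] y0
          by (simp add: field_simps powr_minus powr_realpow)
        have "\<bar>norm (\<phi> y) * u1 a y\<bar> = norm (\<phi> y) * u1 a y"
          by (intro abs_of_nonneg mult_nonneg_nonneg) (auto simp: u1_def le_max_iff_disj)
        also have "\<dots> \<le> (B2 * y powr (-2)) * 1"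
        proof (rule mult_mono)
          show "0 \<le> u1 a y" by (simp add: u1_def le_max_iff_disj)
          show "0 \<le> B2 * y powr (-2)" using \<open>norm (\<phi> y) \<le> _\<close> norm_ge_zero[of "\<phi> y"] by linarith
        qed fact+
        also have "\<dots> \<le> (2 * B2) * y powr (-2)"
        proof -
          have "0 \<le> B2" using B2[OF y0] norm_ge_zero[of "\<phi> y"] zero_le_power[of y 2] y0
            by (smt (verit) mult_nonneg_nonneg)
          then show ?thesis by simp
        qed
        finally show ?thesis .
      qed
    qed (use a in auto)
    define D where "D = C * (\<bar>t\<bar> powr (- (a + 1) / 2) + \<bar>t\<bar> powr (- 1 / 2))"
    have D0: "D \<ge> 0" unfolding D_def using C0 by simp
    have k1pos: "k1 a x > 0" unfolding k1_def using x by simp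
    have k1le: "k1 a x \<le> 1" "k1 a x \<le> x powr (a / 2)" unfolding k1_def by auto
    have main: "k1 a x * (y powr a * norm (S_kernel a x y t)) \<le> D * u1 a y" if y: "y > 0" for y
    proof -
      define z where "z = x * y / T"
      have z0: "z > 0" unfolding z_def using x y T0 by simp
      have nK: "norm (S_kernel a x y t) = T powr (- (a + 1) / 2) * (\<bar>gser ((a - 1) / 2) ((z / 2)\<^sup>2)\<bar> / 2 powr ((a - 1) / 2))"
        using kernel_norm[OF t x y] a unfolding z_def T_def by simp
      have gb: "\<bar>gser ((a - 1) / 2) ((z / 2)\<^sup>2)\<bar> / 2 powr ((a - 1) / 2) \<le> C * (1 + z powr (- a / 2))"
        using K(2)[OF z0] unfolding ex C_def by (simp add: field_simps)
      have I: "T powr (- (a + 1) / 2) * z powr (- a / 2) = T powr (- 1 / 2) * (x powr (- a / 2) * y powr (- a / 2))"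
      proof -
        have zeq: "z powr (- a / 2) = x powr (- a / 2) * y powr (- a / 2) / T powr (- a / 2)"
          unfolding z_def using x y T0 by (simp add: powr_divide powr_mult)
        have "T powr (- (a + 1) / 2) * z powr (- a / 2) =
            (T powr (- (a + 1) / 2) / T powr (- a / 2)) * (x powr (- a / 2) * y powr (- a / 2))"
          unfolding zeq by (rule aux_div)
        also have "T powr (- (a + 1) / 2) / T powr (- a / 2) = T powr (- 1 / 2)"
        proof -
          have "T powr (- (a + 1) / 2) / T powr (- a / 2) = T powr (- (a + 1) / 2 - (- a / 2))"
            by (simp only: powr_diff)
          also have "- (a + 1) / 2 - (- a / 2) = - 1 / 2" by (simp add: field_simps)
          finally show ?thesis .
        qed
        finally show ?thesis .
      qed
      have t1: "T powr (- (a + 1) / 2) * (k1 a x * y powr a) \<le> \<bar>t\<bar> powr (- (a + 1) / 2) * u1 a y"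
      proof (rule mult_mono)
        show "T powr (- (a + 1) / 2) \<le> \<bar>t\<bar> powr (- (a + 1) / 2)"
          unfolding T_def using t a by (intro two_abs_powr) auto
        have "k1 a x * y powr a \<le> 1 * u1 a y" using k1le u1ge k1pos by (intro mult_mono) auto
        then show "k1 a x * y powr a \<le> u1 a y" by simp
      qed (auto simp: k1_def)
      have t2: "T powr (- (a + 1) / 2) * z powr (- a / 2) * (k1 a x * y powr a) \<le> \<bar>t\<bar> powr (- 1 / 2) * u1 a y"
      proof -
        have e1: "k1 a x * x powr (- a / 2) \<le> 1"
        proof -
          have "k1 a x * x powr (- a / 2) \<le> x powr (a / 2) * x powr (- a / 2)"
            using k1le by (intro mult_right_mono) auto
          also have "\<dots> = 1" using x by (simp add: powr_add[symmetric])
          finally show ?thesis .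
        qed
        have e2: "y powr (- a / 2) * y powr a = y powr (a / 2)" using y by (simp add: powr_add[symmetric])
        have "T powr (- (a + 1) / 2) * z powr (- a / 2) * (k1 a x * y powr a)
            = T powr (- 1 / 2) * (k1 a x * x powr (- a / 2)) * (y powr (- a / 2) * y powr a)"
          unfolding I by (simp add: algebra_simps)
        also have "\<dots> \<le> \<bar>t\<bar> powr (- 1 / 2) * 1 * u1 a y"
        proof (intro mult_mono)
          show "T powr (- 1 / 2) \<le> \<bar>t\<bar> powr (- 1 / 2)" unfolding T_def using t by (intro two_abs_powr) auto
          show "y powr (- a / 2) * y powr a \<le> u1 a y" unfolding e2 using u1ge by simp
        qed (use e1 k1pos in auto)
        finally show ?thesis by simp
      qed
      have "k1 a x * (y powr a * norm (S_kernel a x y t)) =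
          T powr (- (a + 1) / 2) * (\<bar>gser ((a - 1) / 2) ((z / 2)\<^sup>2)\<bar> / 2 powr ((a - 1) / 2)) * (k1 a x * y powr a)"
        unfolding nK by (simp add: algebra_simps)
      also have "\<dots> \<le> T powr (- (a + 1) / 2) * (C * (1 + z powr (- a / 2))) * (k1 a x * y powr a)"
        using gb k1pos by (intro mult_right_mono mult_left_mono) auto
      also have "\<dots> = C * (T powr (- (a + 1) / 2) * (k1 a x * y powr a) +
                        T powr (- (a + 1) / 2) * z powr (- a / 2) * (k1 a x * y powr a))"
        by (simp add: algebra_simps)
      also have "\<dots> \<le> C * (\<bar>t\<bar> powr (- (a + 1) / 2) * u1 a y + \<bar>t\<bar> powr (- 1 / 2) * u1 a y)"
        using t1 t2 C0 by (intro mult_left_mono add_mono) auto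
      also have "\<dots> = D * u1 a y" unfolding D_def by (simp add: algebra_simps)
      finally show ?thesis .
    qed
    have "norm (S_op a t \<phi> x) \<le> (D / k1 a x) * (\<integral>y\<in>{0<..}. norm (\<phi> y) * u1 a y \<partial>lborel)"
      unfolding S_op_def
    proof (rule integral_bound_gen[OF hi])
      show "0 \<le> D / k1 a x" using D0 k1pos by simp
      show "0 \<le> norm (\<phi> y) * u1 a y" for y
        by (intro mult_nonneg_nonneg) (auto simp: u1_def le_max_iff_disj)
      fix y :: real assume "y \<in> {0<..}"
      then have y: "y > 0" by simp
      have "k1 a x * norm (y powr a *\<^sub>R (S_kernel a x y t * \<phi> y)) =
            k1 a x * (y powr a * norm (S_kernel a x y t)) * norm (\<phi> y)"
        by (simp add: norm_mult)
      also have "\<dots> \<le> D * u1 a y * norm (\<phi> y)"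
        using main[OF y] by (intro mult_right_mono) auto
      finally show "norm (y powr a *\<^sub>R (S_kernel a x y t * \<phi> y)) \<le> D / k1 a x * (norm (\<phi> y) * u1 a y)"
        using k1pos by (simp add: field_simps)
    qed
    then have "norm (S_op a t \<phi> x) * k1 a x \<le> D * (\<integral>y\<in>{0<..}. norm (\<phi> y) * u1 a y \<partial>lborel)"
      using k1pos by (simp add: field_simps)
    moreover have "norm (S_op a t \<phi> x * complex_of_real (k1 a x)) = norm (S_op a t \<phi> x) * k1 a x"
      using k1pos by (simp add: norm_mult)
    ultimately show "norm (S_op a t \<phi> x * complex_of_real (k1 a x)) \<le>
                   C * (\<bar>t\<bar> powr (- (a + 1) / 2) + \<bar>t\<bar> powr (- 1 / 2)) *
                   (\<integral>y\<in>{0<..}. norm (\<phi> y) * u1 a y \<partial>lborel)" unfolding D_def by simp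
  qed
  then show ?thesis using C0 by blast
qed

theorem propositionP:
  shows "((a::real) \<ge> 0 \<longrightarrow>
           (\<exists>C>0. \<forall>t \<phi>. t \<noteq> 0 \<and> schwartz_plus \<phi> \<longrightarrow>
              (AE x in lborel. x > 0 \<longrightarrow>
                 norm (S_op a t \<phi> x) \<le>
                   C * \<bar>t\<bar> powr (- (a + 1) / 2) *
                   (\<integral>y\<in>{0<..}. norm (\<phi> y) * y powr a \<partial>lborel))))
       \<and> (- 1 < a \<and> a < 0 \<longrightarrow>
           (\<exists>C>0. \<forall>t \<phi>. t \<noteq> 0 \<and> schwartz_plus \<phi> \<longrightarrow>
              (AE x in lborel. x > 0 \<longrightarrow>
                 norm (S_op a t \<phi> x * complex_of_real (k1 a x)) \<le>
                   C * (\<bar>t\<bar> powr (- (a + 1) / 2) + \<bar>t\<bar> powr (- 1 / 2)) *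
                   (\<integral>y\<in>{0<..}. norm (\<phi> y) * u1 a y \<partial>lborel))))"
  using partI[of a] partII[of a] by blast

end
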